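(* Let $1\le k<m$ and let $H$ be a $k$-uniform hypergraph on $m$ vertices that is non-empty (has at least one edge) and non-complete (does not contain all $k$-subsets as edges). Then the number of automorphisms of $H$ satisfies $|\mathrm{Aut}(H)|\le \dfrac{m!}{m-k+1}$.
   Context: A hypergraph $H=(V,E)$ is $k$-uniform if every edge $e\in E$ is a subset of $V$ of size exactly $k$. An automorphism of $H$ is a permutation $\pi$ of $V$ such that $\{\pi(e):e\in E\}=E$; $\mathrm{Aut}(H)$ is the set of all automorphisms. *)

theory Defs
  imports Complex_Main "HOL-Combinatorics.Permutations"
begin

definition uniform_hypergraph :: "nat \<Rightarrow> 'a set \<Rightarrow> 'a set set \<Rightarrow> bool" where
  "uniform_hypergraph k V E \<longleftrightarrow> (\<forall>e\<in>E. e \<subseteq> V \<and> card e = k)"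

definition hyp_aut :: "'a set \<Rightarrow> 'a set set \<Rightarrow> ('a \<Rightarrow> 'a) set" where
  "hyp_aut V E = {\<pi>. \<pi> permutes V \<and> (\<lambda>e. \<pi> ` e) ` E = E}"

end

theory Submission
  imports Defs
begin

lemma pair_aux:
  assumes V: "finite V" and U: "\<forall>e\<in>E. e \<subseteq> V \<and> card e = k"
  shows "e \<in> E \<Longrightarrow> f \<subseteq> V \<Longrightarrow> card f = k \<Longrightarrow> f \<notin> E \<Longrightarrow> card (e - f) = n \<Longrightarrow>
    \<exists>S a b. a \<notin> S \<and> b \<notin> S \<and> a \<noteq> b \<and> insert a S \<in> E \<and> insert b S \<notin> E
       \<and> insert b S \<subseteq> V \<and> card (insert b S) = k"
proof (induction n arbitrary: e f rule: less_induct)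
  case (less n)
  have ev: "e \<subseteq> V" "card e = k" using U less.prems(1) by auto
  have fin: "finite e" "finite f" using ev less.prems(2) V finite_subset by auto
  have ne: "e \<noteq> f" using less.prems by auto
  have c1: "card (e - f) = card e - card (e \<inter> f)"
    using card_Diff_subset_Int[of e f] fin by simp
  have c2: "card (f - e) = card f - card (e \<inter> f)"
    using card_Diff_subset_Int[of f e] fin by (simp add: Int_commute)
  have ceq: "card (e - f) = card (f - e)" using c1 c2 ev less.prems by simp
  have "e - f \<noteq> {}"
  proof
    assume "e - f = {}"
    hence "e \<subseteq> f" by auto
    hence "e = f" using card_subset_eq[OF fin(2)] ev less.prems(3) by metis
    thus False using ne by simp
  qed
  hence npos: "n \<ge> 1" using less.prems(5) fin(1) card_gt_0_iff[of "e-f"] by simp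
  show ?case
  proof (cases "n = 1")
    case True
    have "card (e - f) = 1" using less.prems(5) True by simp
    then obtain a where a: "e - f = {a}" by (rule card_1_singletonE)
    have "card (f - e) = 1" using ceq less.prems(5) True by simp
    then obtain b where b: "f - e = {b}" by (rule card_1_singletonE)
    define S where "S = e \<inter> f"
    have "e = insert a S" using a S_def by blast
    moreover have "f = insert b S" using b S_def by blast
    moreover have "a \<notin> S" "b \<notin> S" "a \<noteq> b" using a b S_def by auto
    ultimately show ?thesis using less.prems(1-4) by blast
  next
    case False
    hence n2: "n \<ge> 2" using npos by simp
    obtain x where x: "x \<in> e - f" using \<open>e - f \<noteq> {}\<close> by blast
    have "f - e \<noteq> {}" using ceq less.prems(5) npos by (metis card.empty not_one_le_zero)
    then obtain y where y: "y \<in> f - e" by blast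
    define g where "g = insert y (e - {x})"
    have gV: "g \<subseteq> V" using g_def y less.prems(2) ev by auto
    have yn: "y \<notin> e - {x}" using y by auto
    have "k \<ge> 1" using x fin(1) ev(2) card_gt_0_iff[of e] by auto
    hence cg: "card g = k" unfolding g_def using yn x fin ev
      by (simp add: card_Diff_singleton)
    have "g - f = (e - f) - {x}" using g_def y by auto
    hence gf: "card (g - f) < n" using x less.prems(5) fin card_Diff1_less[of "e - f" x]
      by simp
    have "e - g = {x}" using g_def x y by auto
    hence eg: "card (e - g) < n" using n2 by simp
    show ?thesis
    proof (cases "g \<in> E")
      case True
      show ?thesis using less.IH[OF gf True less.prems(2,3,4) refl] .
    next
      case False
      show ?thesis using less.IH[OF eg less.prems(1) gV cg False refl] .
    qed
  qed
qed

lemma inv_image_iff: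
  assumes "\<sigma> \<circ> \<sigma> = id"
  shows "u \<in> (\<lambda>e. \<sigma> ` e) ` E \<longleftrightarrow> \<sigma> ` u \<in> E"
proof
  assume "u \<in> (\<lambda>e. \<sigma> ` e) ` E"
  then obtain e where "e \<in> E" "u = \<sigma> ` e" by auto
  thus "\<sigma> ` u \<in> E" using assms by (simp add: image_comp)
next
  assume "\<sigma> ` u \<in> E"
  moreover have "u = \<sigma> ` (\<sigma> ` u)" using assms by (simp add: image_comp)
  ultimately show "u \<in> (\<lambda>e. \<sigma> ` e) ` E" by blast
qed

theorem theorem3p4:
  fixes V :: "'a set" and E :: "'a set set" and k m :: nat
  assumes "finite V" and "card V = m"
    and "1 \<le> k" and "k < m"
    and "uniform_hypergraph k V E"
    and "E \<noteq> {}"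
    and "E \<noteq> {e. e \<subseteq> V \<and> card e = k}"
  shows "real (card (hyp_aut V E)) \<le> real (fact m) / real (m - k + 1)"
proof -
  have U: "\<forall>e\<in>E. e \<subseteq> V \<and> card e = k" using assms(5) unfolding uniform_hypergraph_def .
  obtain e where e: "e \<in> E" using assms(6) by blast
  have "E \<subseteq> {e. e \<subseteq> V \<and> card e = k}" using U by auto
  then obtain f where f: "f \<subseteq> V" "card f = k" "f \<notin> E" using assms(7) by blast
  obtain S a b where ab: "a \<notin> S" "b \<notin> S" "a \<noteq> b" "insert a S \<in> E" "insert b S \<notin> E"
    "insert b S \<subseteq> V" "card (insert b S) = k"
    using pair_aux[OF assms(1) U e f refl] by blast
  have aV: "insert a S \<subseteq> V" using U ab(4) by auto
  have finS: "finite S" using finite_subset[OF ab(6) assms(1)] by simp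
  define W where "W = V - S"
  have cS: "card S = k - 1" using ab(7) ab(2) finS by simp
  have SV: "S \<subseteq> V" using ab(6) by simp
  have "card W = card V - card S" unfolding W_def using SV finS by (simp add: card_Diff_subset)
  hence cW: "card W = m - k + 1" using assms(2-4) cS by simp
  define T where "T = {z \<in> W. insert z S \<in> E}"
  have aW: "a \<in> W" using ab(1) aV unfolding W_def by simp
  have bW: "b \<in> W" "b \<notin> T" using ab(2,5,6) unfolding T_def W_def by simp_all
  have aT: "a \<in> T" using aW ab(4) unfolding T_def by simp
  have TW: "T \<subseteq> W" unfolding T_def by auto
  define \<rho> where "\<rho> x = (if x = b then id else if x \<in> T then transpose b x else transpose a x)" for x
  have perm: "\<rho> x permutes V" if "x \<in> W" for x
    using that aW bW unfolding \<rho>_def W_def by (auto intro: permutes_swap_id permutes_id)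
  have invol: "\<rho> x \<circ> \<rho> x = id" for x unfolding \<rho>_def by auto
  have fixS: "\<rho> x z = z" if "x \<in> W" "z \<in> S" for x z
    using that aW bW unfolding \<rho>_def W_def by (auto simp: transpose_def)
  have key: "insert z S \<in> (\<lambda>e. \<rho> x ` e) ` E \<longleftrightarrow> \<rho> x z \<in> T" if "x \<in> W" "z \<in> W" for x z
  proof -
    have "\<rho> x z \<in> V" using perm[OF that(1)] that(2) unfolding W_def
      by (simp add: permutes_in_image)
    moreover have "\<rho> x z \<notin> S"
    proof
      assume "\<rho> x z \<in> S"
      hence "\<rho> x (\<rho> x z) \<in> S" using fixS that(1) by simp
      hence "z \<in> S" using invol[of x] by (metis comp_apply id_apply)
      thus False using that(2) unfolding W_def by auto
    qed
    ultimately have rW: "\<rho> x z \<in> W" unfolding W_def by auto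
    have "\<rho> x ` S = S" using fixS[OF that(1)] by (simp add: image_cong)
    hence "\<rho> x ` insert z S = insert (\<rho> x z) S" by simp
    thus ?thesis using inv_image_iff[OF invol[of x], of "insert z S" E] rW unfolding T_def by auto
  qed
  have dist: "x = y" if "x \<in> W" "y \<in> W" "(\<lambda>e. \<rho> x ` e) ` E = (\<lambda>e. \<rho> y ` e) ` E" for x y
  proof (rule ccontr)
    assume ne: "x \<noteq> y"
    have eq: "\<rho> x z \<in> T \<longleftrightarrow> \<rho> y z \<in> T" if "z \<in> W" for z
      using key[OF \<open>x \<in> W\<close> that] key[OF \<open>y \<in> W\<close> that] \<open>(\<lambda>e. \<rho> x ` e) ` E = (\<lambda>e. \<rho> y ` e) ` E\<close> by simp
    have C: "\<exists>z\<in>W. \<not> (\<rho> x z \<in> T \<longleftrightarrow> \<rho> y z \<in> T)" if cx: "x \<in> W" and cy: "y \<in> W" and cne: "x \<noteq> y" for x y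
    proof -
      consider "x = b" | "x \<noteq> b" "x \<in> T" | "x \<noteq> b" "x \<notin> T" by blast
      thus ?thesis
      proof cases
        case 1
        then consider "y \<in> T" | "y \<notin> T" "y \<noteq> b" using cx cy cne by blast
        thus ?thesis
        proof cases
          case 1 thus ?thesis using \<open>x = b\<close> cx cy cne bW aT using ab(3) unfolding \<rho>_def by (intro bexI[of _ y]) (auto simp: transpose_def)
        next
          case 2 thus ?thesis using \<open>x = b\<close> cx cy cne bW aT aW using ab(3) unfolding \<rho>_def by (intro bexI[of _ a]) (auto simp: transpose_def)
        qed
      next
        case 2
        then consider "y = b" | "y \<in> T" | "y \<notin> T" "y \<noteq> b" by blast
        thus ?thesis
        proof cases
          case 1 thus ?thesis using 2 cx cy cne bW aT using ab(3) unfolding \<rho>_def by (intro bexI[of _ x]) (auto simp: transpose_def)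
        next
          case 2 thus ?thesis using \<open>x \<noteq> b\<close> \<open>x \<in> T\<close> cx cy cne bW aT aW using ab(3) unfolding \<rho>_def by (intro bexI[of _ y]) (auto simp: transpose_def)
        next
          case 3 thus ?thesis using \<open>x \<noteq> b\<close> \<open>x \<in> T\<close> cx cy cne bW aT aW using ab(3) unfolding \<rho>_def by (intro bexI[of _ b]) (auto simp: transpose_def)
        qed
      next
        case 3
        then consider "y = b" | "y \<in> T" | "y \<notin> T" "y \<noteq> b" by blast
        thus ?thesis
        proof cases
          case 1 thus ?thesis using 3 cx cy cne bW aT aW using ab(3) unfolding \<rho>_def by (intro bexI[of _ a]) (auto simp: transpose_def)
        next
          case 2 thus ?thesis using 3 cx cy cne bW aT aW using ab(3) unfolding \<rho>_def by (intro bexI[of _ b]) (auto simp: transpose_def)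
        next
          case 3 thus ?thesis using \<open>x \<noteq> b\<close> \<open>x \<notin> T\<close> cx cy cne bW aT aW using ab(3) unfolding \<rho>_def by (intro bexI[of _ y]) (auto simp: transpose_def)
        qed
      qed
    qed
    show False using C[OF that(1,2) ne] eq by blast
  qed
  define G where "G = hyp_aut V E"
  define F where "F p = \<rho> (fst p) \<circ> (snd p :: 'a \<Rightarrow> 'a)" for p
  have inj: "inj_on F (W \<times> G)"
  proof (rule inj_onI)
    fix p q assume p: "p \<in> W \<times> G" and q: "q \<in> W \<times> G" and Fe: "F p = F q"
    have im: "(\<lambda>e. F r ` e) ` E = (\<lambda>e. \<rho> (fst r) ` e) ` E" if "r \<in> W \<times> G" for r
    proof -
      have "(\<lambda>e. snd r ` e) ` E = E" using that unfolding G_def hyp_aut_def by auto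
      hence "(\<lambda>e. \<rho> (fst r) ` e) ` ((\<lambda>e. snd r ` e) ` E) = (\<lambda>e. \<rho> (fst r) ` e) ` E" by simp
      thus ?thesis unfolding F_def by (simp add: image_comp image_image)
    qed
    have "fst p = fst q" using dist[of "fst p" "fst q"] im[OF p] im[OF q] Fe p q by auto
    moreover have "snd p = snd q"
    proof -
      have "\<rho> (fst p) \<circ> (\<rho> (fst p) \<circ> snd p) = \<rho> (fst p) \<circ> (\<rho> (fst p) \<circ> snd q)"
        using Fe \<open>fst p = fst q\<close> unfolding F_def by simp
      thus ?thesis using invol[of "fst p"] by (simp add: comp_assoc[symmetric])
    qed
    ultimately show "p = q" by (simp add: prod_eq_iff)
  qed
  have sub: "F ` (W \<times> G) \<subseteq> {p. p permutes V}"
    using perm unfolding F_def G_def hyp_aut_def by (auto intro: permutes_compose)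
  have finW: "finite W" unfolding W_def using assms(1) by simp
  have finG: "finite G" unfolding G_def hyp_aut_def
    using finite_permutations[OF assms(1)] by (rule rev_finite_subset) auto
  have "card (W \<times> G) \<le> card {p. p permutes V}"
    using card_inj_on_le[OF inj sub finite_permutations[OF assms(1)]] .
  hence "(m - k + 1) * card G \<le> fact m"
    using card_permutations[OF assms(2,1)] cW by (simp add: card_cartesian_product)
  hence "real (m - k + 1) * real (card G) \<le> real (fact m)"
    by (metis of_nat_fact of_nat_le_iff of_nat_mult)
  thus ?thesis unfolding G_def by (simp add: field_simps)
qed

end
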